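(* Let $A$ be a finite dimensional quiver algebra of finite global dimension with $n$ vertices, whose Cartan matrix $\omega_A$ (with respect to a fixed numbering $1,\ldots,n$ of the vertices) is lower triangular, and let $\omega_A=\hat{U}_1 R \hat{U}_2$ be a Bruhat decomposition of $\omega_A$. Then the Coxeter permutation $p_A$ of $A$ coincides with the row-permutation associated to the permutation matrix $R$.
   Context: A quiver algebra is $A=KQ/I$ with $K$ a field, $Q$ a finite connected quiver with vertices $1,\ldots,n$ and $I$ an admissible ideal; $e_i$ are the primitive idempotents of the vertices. The Cartan matrix is the $n\times n$ matrix $\omega_A=(\omega_{ij})$ with $\omega_{ij}=\dim_K e_jAe_i$; for finite global dimension it is invertible over $\mathbb{Z}$, and the Coxeter matrix is $C_A=-\omega_A^T\omega_A^{-1}$. A Bruhat decomposition of an invertible real matrix $M$ is a factorisation $M=U_1PU_2$ with $U_1,U_2$ upper triangular and $P$ a permutation matrix; $P$ is uniquely determined by $M$. For a permutation matrix $P$, the row-permutation $p_r$ is given by $p_r(i)=j$ if the unique non-zero entry of row $i$ of $P$ lies in column $j$, and the column-permutation $p_c$ by $p_c(i)=j$ if the unique non-zero entry of column $i$ lies in row $j$. The Coxeter permutation $p_A$ is the column-permutation of the permutation matrix in a Bruhat decomposition of $C_A$. *)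

theory Defs
  imports "Jordan_Normal_Form.Matrix"
begin

text \<open>Matrices are Jordan_Normal_Form matrices; the vertices 1..n of the paper are
  indexed here by 0..<n.\<close>

definition lower_triangular :: "'a::zero mat \<Rightarrow> bool" where
  "lower_triangular A \<equiv> \<forall>i < dim_row A. \<forall>j < dim_col A. i < j \<longrightarrow> A $$ (i,j) = 0"

definition permutation_mat :: "nat \<Rightarrow> 'a::{zero,one} mat \<Rightarrow> bool" where
  "permutation_mat n P \<equiv> P \<in> carrier_mat n n
     \<and> (\<forall>i<n. \<forall>j<n. P $$ (i,j) = 0 \<or> P $$ (i,j) = 1)
     \<and> (\<forall>i<n. \<exists>!j. j < n \<and> P $$ (i,j) = 1)
     \<and> (\<forall>j<n. \<exists>!i. i < n \<and> P $$ (i,j) = 1)"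

definition row_perm :: "'a::zero mat \<Rightarrow> nat \<Rightarrow> nat" where
  "row_perm P i = (THE j. j < dim_col P \<and> P $$ (i,j) \<noteq> 0)"

definition col_perm :: "'a::zero mat \<Rightarrow> nat \<Rightarrow> nat" where
  "col_perm P i = (THE j. j < dim_row P \<and> P $$ (j,i) \<noteq> 0)"

definition bruhat_decomp :: "real mat \<Rightarrow> real mat \<Rightarrow> real mat \<Rightarrow> real mat \<Rightarrow> bool" where
  "bruhat_decomp M U1 P U2 \<equiv>
     (let n = dim_row M in
       M \<in> carrier_mat n n \<and> invertible_mat M \<and>
       U1 \<in> carrier_mat n n \<and> upper_triangular U1 \<and>
       U2 \<in> carrier_mat n n \<and> upper_triangular U2 \<and>
       permutation_mat n P \<and> M = U1 * P * U2)"

definition mat_inv :: "'a::semiring_1 mat \<Rightarrow> 'a mat" where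
  "mat_inv A = (SOME B. B \<in> carrier_mat (dim_row A) (dim_row A) \<and>
                        A * B = 1\<^sub>m (dim_row A) \<and> B * A = 1\<^sub>m (dim_row A))"

definition coxeter_mat :: "real mat \<Rightarrow> real mat" where
  "coxeter_mat W = - (transpose_mat W * mat_inv W)"

text \<open>Matrix-level properties of the Cartan matrix omega_ij = dim e_j A e_i of a
  quiver algebra KQ/I with n vertices and finite global dimension:
  square n x n, non-negative integer entries, positive diagonal (e_i A e_i contains e_i),
  and invertible over the integers.\<close>
definition cartan_matrix_fgd :: "nat \<Rightarrow> int mat \<Rightarrow> bool" where
  "cartan_matrix_fgd n W \<equiv> 0 < n \<and> W \<in> carrier_mat n n
     \<and> (\<forall>i<n. \<forall>j<n. 0 \<le> W $$ (i,j)) \<and> (\<forall>i<n. 1 \<le> W $$ (i,i))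
     \<and> invertible_mat W"

end

theory Submission
  imports Defs "Jordan_Normal_Form.Determinant"
begin

lemma mult_entry:
  assumes "A \<in> carrier_mat n n" "B \<in> carrier_mat n n" "i < n" "j < n"
  shows "(A * B) $$ (i,j) = (\<Sum>k\<in>{0..<n}. A $$ (i,k) * B $$ (k,j))"
  using assms by (simp add: scalar_prod_def row_def col_def)

lemma ut_mult:
  assumes A: "A \<in> carrier_mat n n" and B: "B \<in> carrier_mat n n"
    and uA: "upper_triangular A" and uB: "upper_triangular (B :: 'a :: comm_ring_1 mat)"
  shows "upper_triangular (A*B)" and "\<And>i. i<n \<Longrightarrow> (A*B)$$(i,i) = A$$(i,i)*B$$(i,i)"
proof -
  show "upper_triangular (A*B)"
  proof (rule upper_triangularI)
    fix i j assume ji: "j < i" and i: "i < dim_row (A*B)"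
    hence i': "i < n" using A by simp
    have "(A * B) $$ (i,j) = (\<Sum>k\<in>{0..<n}. A $$ (i,k) * B $$ (k,j))"
      using mult_entry[OF A B i'] ji i' by simp
    also have "\<dots> = 0"
    proof (rule sum.neutral, intro ballI)
      fix k assume k: "k \<in> {0..<n}"
      show "A $$ (i,k) * B $$ (k,j) = 0"
      proof (cases "k < i")
        case True thus ?thesis using upper_triangularD[OF uA True] A i' by simp
      next
        case False hence "j < k" using ji by simp
        thus ?thesis using upper_triangularD[OF uB] B k by simp
      qed
    qed
    finally show "(A * B) $$ (i,j) = 0" .
  qed
  fix i assume i: "i < n"
  have "(A * B) $$ (i,i) = (\<Sum>k\<in>{0..<n}. A $$ (i,k) * B $$ (k,i))"
    using mult_entry[OF A B i i] .
  also have "\<dots> = A $$ (i,i) * B $$ (i,i) + (\<Sum>k\<in>{0..<n} - {i}. A $$ (i,k) * B $$ (k,i))"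
    by (subst sum.remove[of _ i], insert i, auto)
  also have "(\<Sum>k\<in>{0..<n} - {i}. A $$ (i,k) * B $$ (k,i)) = 0"
  proof (rule sum.neutral, intro ballI)
    fix k assume k: "k \<in> {0..<n} - {i}"
    show "A $$ (i,k) * B $$ (k,i) = 0"
    proof (cases "k < i")
      case True thus ?thesis using upper_triangularD[OF uA True] A i by simp
    next
      case False hence "i < k" using k by simp
      thus ?thesis using upper_triangularD[OF uB] B k by simp
    qed
  qed
  finally show "(A*B)$$(i,i) = A$$(i,i)*B$$(i,i)" by simp
qed

lemma ut_diag_nz:
  assumes U: "U \<in> carrier_mat n n" and uU: "upper_triangular U" and d: "det U \<noteq> (0::'a::idom)"
    and i: "i < n"
  shows "U $$ (i,i) \<noteq> 0"
proof
  assume "U $$ (i,i) = 0"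
  hence "0 \<in> set (diag_mat U)" using U i unfolding diag_mat_def by force
  hence "prod_list (diag_mat U) = 0" by (simp add: prod_list_zero_iff)
  thus False using d det_upper_triangular[OF uU U] by simp
qed

lemma ut_inv:
  assumes U: "U \<in> carrier_mat n n" and uU: "upper_triangular U" and X: "X \<in> carrier_mat n n"
    and UX: "U * X = 1\<^sub>m n" and d: "\<forall>i<n. U $$ (i,i) \<noteq> (0::'a::idom)"
  shows "upper_triangular X"
proof -
  have main: "X $$ (i,j) = 0" if "i < n" "j < i" for i j
    using that
  proof (induct "n - i" arbitrary: i rule: less_induct)
    case (less i)
    have jn: "j < n" using less by simp
    have "0 = (U * X) $$ (i,j)" using UX less by simp
    also have "\<dots> = (\<Sum>k\<in>{0..<n}. U $$ (i,k) * X $$ (k,j))"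
      using mult_entry[OF U X less(2) jn] .
    also have "\<dots> = U $$ (i,i) * X $$ (i,j) + (\<Sum>k\<in>{0..<n} - {i}. U $$ (i,k) * X $$ (k,j))"
      by (subst sum.remove[of _ i], insert less, auto)
    also have "(\<Sum>k\<in>{0..<n} - {i}. U $$ (i,k) * X $$ (k,j)) = 0"
    proof (rule sum.neutral, intro ballI)
      fix k assume k: "k \<in> {0..<n} - {i}"
      show "U $$ (i,k) * X $$ (k,j) = 0"
      proof (cases "k < i")
        case True thus ?thesis using upper_triangularD[OF uU True] U less by simp
      next
        case False hence "i < k" using k by simp
        hence "X $$ (k,j) = 0" using less k by auto
        thus ?thesis by simp
      qed
    qed
    finally show ?case using d less by simp
  qed
  show ?thesis by (rule upper_triangularI, insert main X, auto)
qed


lemma perm_carrier: "permutation_mat n P \<Longrightarrow> P \<in> carrier_mat n n"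
  unfolding permutation_mat_def by (rule conjunct1)

lemma ex1_eq: "\<exists>!x. Q x \<Longrightarrow> Q a \<Longrightarrow> Q b \<Longrightarrow> a = b"
  by blast

lemma perm_fun:
  assumes "permutation_mat n (P :: 'a :: zero_neq_one mat)"
  shows "\<exists>f. (\<forall>i<n. f i < n) \<and> (\<forall>i<n. \<forall>j<n. P $$ (i,j) = (if j = f i then 1 else 0)) \<and> inj_on f {..<n}"
proof -
  note pm = assms[unfolded permutation_mat_def]
  note pm1 = pm[THEN conjunct2, THEN conjunct1, rule_format]
  note pm2 = pm[THEN conjunct2, THEN conjunct2, THEN conjunct1, rule_format]
  note pm3 = pm[THEN conjunct2, THEN conjunct2, THEN conjunct2, rule_format]
  define f where "f i = (THE j. j < n \<and> P $$ (i,j) = 1)" for i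
  have f: "f i < n \<and> P $$ (i, f i) = 1" if "i < n" for i
    unfolding f_def by (rule theI'[OF pm2[OF that]])
  have fu: "j = f i" if "i < n" "j < n" "P $$ (i,j) = 1" for i j
    by (rule ex1_eq[OF pm2[OF that(1)]], insert that f[OF that(1)], auto)
  have ent: "P $$ (i,j) = (if j = f i then 1 else 0)" if "i < n" "j < n" for i j
  proof (cases "j = f i")
    case True thus ?thesis using f[OF that(1)] by simp
  next
    case False
    have 01: "P $$ (i,j) = 0 \<or> P $$ (i,j) = 1" using pm1[OF that] .
    have "P $$ (i,j) \<noteq> 1" using fu[OF that] False by blast
    thus ?thesis using 01 False by simp
  qed
  have "inj_on f {..<n}"
  proof (rule inj_onI)
    fix i i' assume "i \<in> {..<n}" "i' \<in> {..<n}" "f i = f i'"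
    hence i: "i < n" "i' < n" and fe: "f i = f i'" by auto
    show "i = i'"
      by (rule ex1_eq[OF pm3[of "f i"]], insert f[OF i(1)] f[OF i(2)] i fe, auto)
  qed
  moreover have "\<forall>i<n. f i < n" using f by blast
  moreover have "\<forall>i<n. \<forall>j<n. P $$ (i,j) = (if j = f i then 1 else 0)" using ent by blast
  ultimately show ?thesis by (intro exI[of _ f] conjI)
qed

lemma inverse_from_det:
  assumes A: "A \<in> carrier_mat n n" and d: "det A \<noteq> (0 :: 'a :: field)"
  shows "\<exists>B. B \<in> carrier_mat n n \<and> A * B = 1\<^sub>m n \<and> B * A = 1\<^sub>m n"
  using det_non_zero_imp_unit[OF A d, of undefined]
  unfolding Units_def ring_mat_def by auto

lemma bruhat_unique:
  fixes M :: "real mat"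
  assumes M1: "M = A1 * P * A2" and M2: "M = B1 * Q * B2"
    and c: "A1 \<in> carrier_mat n n" "A2 \<in> carrier_mat n n" "B1 \<in> carrier_mat n n" "B2 \<in> carrier_mat n n"
    and u: "upper_triangular A1" "upper_triangular A2" "upper_triangular B1" "upper_triangular B2"
    and pP: "permutation_mat n P" and pQ: "permutation_mat n Q"
    and dM: "det M \<noteq> 0"
  shows "P = Q"
proof -
  have cP: "P \<in> carrier_mat n n" and cQ: "Q \<in> carrier_mat n n"
    using perm_carrier[OF pP] perm_carrier[OF pQ] by auto
  have dM1: "det M = det A1 * det P * det A2"
    unfolding M1 using c cP by (simp add: det_mult[of _ n])
  have dM2: "det M = det B1 * det Q * det B2"
    unfolding M2 using c cQ by (simp add: det_mult[of _ n])
  have dA1: "det A1 \<noteq> 0" and dA2: "det A2 \<noteq> 0" using dM dM1 by auto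
  have dB1: "det B1 \<noteq> 0" and dB2: "det B2 \<noteq> 0" using dM dM2 by auto
  obtain B1i where B1i: "B1i \<in> carrier_mat n n" "B1 * B1i = 1\<^sub>m n" "B1i * B1 = 1\<^sub>m n"
    using inverse_from_det[OF c(3) dB1] by blast
  obtain A2i where A2i: "A2i \<in> carrier_mat n n" "A2 * A2i = 1\<^sub>m n" "A2i * A2 = 1\<^sub>m n"
    using inverse_from_det[OF c(2) dA2] by blast
  have uB1i: "upper_triangular B1i"
    by (rule ut_inv[OF c(3) u(3) B1i(1) B1i(2)], insert ut_diag_nz[OF c(3) u(3) dB1], auto)
  have uA2i: "upper_triangular A2i"
    by (rule ut_inv[OF c(2) u(2) A2i(1) A2i(2)], insert ut_diag_nz[OF c(2) u(2) dA2], auto)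
  have dB1i: "det B1i \<noteq> 0" using arg_cong[OF B1i(2), of det] det_mult[OF c(3) B1i(1)] by auto
  have dA2i: "det A2i \<noteq> 0" using arg_cong[OF A2i(2), of det] det_mult[OF c(2) A2i(1)] by auto
  define X where "X = B1i * A1"
  define Y where "Y = B2 * A2i"
  have cX: "X \<in> carrier_mat n n" and cY: "Y \<in> carrier_mat n n"
    unfolding X_def Y_def using c B1i A2i by auto
  have XdiagE: "X $$ (i,i) \<noteq> 0" if "i < n" for i
    unfolding X_def using ut_mult(2)[OF B1i(1) c(1) uB1i u(1) that]
      ut_diag_nz[OF B1i(1) uB1i dB1i that] ut_diag_nz[OF c(1) u(1) dA1 that] by simp
  have uY: "upper_triangular Y" unfolding Y_def by (rule ut_mult(1)[OF c(4) A2i(1) u(4) uA2i])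
  have eq: "X * P = Q * Y"
  proof -
    have "X * P = B1i * A1 * P * A2 * A2i"
      unfolding X_def using c B1i A2i cP by (simp add: assoc_mult_mat[of _ n n _ n _ n])
    also have "\<dots> = B1i * M * A2i" unfolding M1
      using c B1i A2i cP by (simp add: assoc_mult_mat[of _ n n _ n _ n])
    also have "\<dots> = B1i * B1 * Q * B2 * A2i" unfolding M2
      using c B1i(1) A2i(1) cQ by (simp add: assoc_mult_mat[of _ n n _ n _ n])
    also have "\<dots> = Q * Y" unfolding Y_def B1i(3)
      using c B1i A2i cQ by (simp add: assoc_mult_mat[of _ n n _ n _ n])
    finally show ?thesis .
  qed
  obtain f where f: "\<forall>i<n. f i < n" "\<forall>i<n. \<forall>j<n. P $$ (i,j) = (if j = f i then 1 else 0)" "inj_on f {..<n}"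
    using perm_fun[OF pP] by blast
  obtain g where g: "\<forall>i<n. g i < n" "\<forall>i<n. \<forall>j<n. Q $$ (i,j) = (if j = g i then 1 else 0)" "inj_on g {..<n}"
    using perm_fun[OF pQ] by blast
  have le: "g i \<le> f i" if i: "i < n" for i
  proof -
    have fi: "f i < n" using f i by auto
    have gi: "g i < n" using g i by auto
    have "(X * P) $$ (i, f i) = (\<Sum>k\<in>{0..<n}. X $$ (i,k) * P $$ (k, f i))"
      by (rule mult_entry[OF cX cP i fi])
    also have "\<dots> = (\<Sum>k\<in>{0..<n}. if k = i then X $$ (i,i) else 0)"
    proof (rule sum.cong[OF refl])
      fix k assume k: "k \<in> {0..<n}"
      have "f k = f i \<longleftrightarrow> k = i" using f(3) k i unfolding inj_on_def by auto
      thus "X $$ (i,k) * P $$ (k, f i) = (if k = i then X $$ (i,i) else 0)"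
        using f(2) k fi by auto
    qed
    also have "\<dots> = X $$ (i,i)" using i by simp
    finally have 1: "(X * P) $$ (i, f i) \<noteq> 0" using XdiagE[OF i] by simp
    have "(Q * Y) $$ (i, f i) = (\<Sum>k\<in>{0..<n}. Q $$ (i,k) * Y $$ (k, f i))"
      by (rule mult_entry[OF cQ cY i fi])
    also have "\<dots> = (\<Sum>k\<in>{0..<n}. if k = g i then Y $$ (g i, f i) else 0)"
      by (rule sum.cong[OF refl], insert g(2) i, auto)
    also have "\<dots> = Y $$ (g i, f i)" using gi by simp
    finally have "Y $$ (g i, f i) \<noteq> 0" using 1 eq by simp
    thus ?thesis using upper_triangularD[OF uY, of "f i" "g i"] cY gi by force
  qed
  have img: "h ` {..<n} = {..<n}" if "\<forall>i<n. h i < n" "inj_on h {..<n}" for h :: "nat \<Rightarrow> nat"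
    by (rule endo_inj_surj, insert that, auto)
  have sumeq: "sum h {..<n} = sum id {..<n}" if "\<forall>i<n. h i < n" "inj_on h {..<n}" for h :: "nat \<Rightarrow> nat"
    using sum.reindex[OF that(2), of id] img[OF that] by simp
  have fg: "f i = g i" if i: "i < n" for i
  proof (rule ccontr)
    assume "f i \<noteq> g i"
    hence "g i < f i" using le[OF i] by simp
    hence "sum g {..<n} < sum f {..<n}"
      by (intro sum_strict_mono_ex1, insert le i, auto)
    thus False using sumeq[OF f(1) f(3)] sumeq[OF g(1) g(3)] by simp
  qed
  show ?thesis by (rule eq_matI, insert cP cQ f(2) g(2) fg, auto)
qed


lemma perm_transpose:
  assumes "permutation_mat n (R :: 'a :: {zero,one} mat)"
  shows "permutation_mat n (transpose_mat R)"
proof -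
  note pm = assms[unfolded permutation_mat_def]
  note pm1 = pm[THEN conjunct2, THEN conjunct1, rule_format]
  note pm2 = pm[THEN conjunct2, THEN conjunct2, THEN conjunct1, rule_format]
  note pm3 = pm[THEN conjunct2, THEN conjunct2, THEN conjunct2, rule_format]
  have cR: "R \<in> carrier_mat n n" using perm_carrier[OF assms] .
  have e1: "(\<lambda>j. j < n \<and> transpose_mat R $$ (i,j) = 1) = (\<lambda>j. j < n \<and> R $$ (j,i) = 1)"
    if "i < n" for i using that cR by auto
  have e2: "(\<lambda>i. i < n \<and> transpose_mat R $$ (i,j) = 1) = (\<lambda>i. i < n \<and> R $$ (j,i) = 1)"
    if "j < n" for j using that cR by auto
  show ?thesis unfolding permutation_mat_def
  proof (intro conjI allI impI)
    show "transpose_mat R \<in> carrier_mat n n" using cR by auto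
  next
    fix i j assume ij: "i < n" "j < n"
    thus "transpose_mat R $$ (i, j) = 0 \<or> transpose_mat R $$ (i, j) = 1" using pm1[OF ij(2) ij(1)] cR by simp
  next
    fix i assume i: "i < n"
    show "\<exists>!j. j < n \<and> transpose_mat R $$ (i, j) = 1"
      unfolding e1[OF i] by (rule pm3[OF i])
  next
    fix j assume j: "j < n"
    show "\<exists>!i. i < n \<and> transpose_mat R $$ (i, j) = 1"
      unfolding e2[OF j] by (rule pm2[OF j])
  qed
qed

lemma perm_mult_transpose:
  assumes pR: "permutation_mat n (R :: 'a :: comm_ring_1 mat)"
  shows "R * transpose_mat R = 1\<^sub>m n"
proof -
  have cR: "R \<in> carrier_mat n n" using perm_carrier[OF pR] .
  obtain f where f: "\<forall>i<n. f i < n" "\<forall>i<n. \<forall>j<n. R $$ (i,j) = (if j = f i then 1 else 0)" "inj_on f {..<n}"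
    using perm_fun[OF pR] by blast
  show ?thesis
  proof (rule eq_matI)
    fix i j assume i: "i < dim_row (1\<^sub>m n :: 'a mat)" and j: "j < dim_col (1\<^sub>m n :: 'a mat)"
    hence i': "i < n" and j': "j < n" by auto
    have "(R * transpose_mat R) $$ (i,j) = (\<Sum>k\<in>{0..<n}. R $$ (i,k) * transpose_mat R $$ (k,j))"
      by (rule mult_entry[OF cR _ i' j'], insert cR, auto)
    also have "\<dots> = (\<Sum>k\<in>{0..<n}. if k = f i then (if i = j then 1 else 0) else 0)"
    proof (rule sum.cong[OF refl])
      fix k assume k: "k \<in> {0..<n}"
      have "f i = f j \<longleftrightarrow> i = j" using f(3) i' j' unfolding inj_on_def by auto
      thus "R $$ (i,k) * transpose_mat R $$ (k,j) = (if k = f i then (if i = j then 1 else 0) else 0)"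
        using f(2) k i' j' cR by auto
    qed
    also have "\<dots> = (if i = j then 1 else 0)" using f(1) i' by simp
    finally show "(R * transpose_mat R) $$ (i,j) = 1\<^sub>m n $$ (i,j)" using i' j' by simp
  qed (insert cR, auto)
qed

theorem lemma2p6:
  fixes n :: nat and W :: "int mat" and U1 R U2 :: "real mat"
  assumes "cartan_matrix_fgd n W"
    and "lower_triangular W"
    and "bruhat_decomp (map_mat real_of_int W) U1 R U2"
  shows "(\<exists>V1 P V2. bruhat_decomp (coxeter_mat (map_mat real_of_int W)) V1 P V2)
       \<and> (\<forall>V1 P V2. bruhat_decomp (coxeter_mat (map_mat real_of_int W)) V1 P V2
              \<longrightarrow> (\<forall>i<n. col_perm P i = row_perm R i))"
proof -
  define M where "M = map_mat real_of_int W"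
  have cW: "W \<in> carrier_mat n n" using assms(1) unfolding cartan_matrix_fgd_def by auto
  have cM: "M \<in> carrier_mat n n" unfolding M_def using cW by auto
  have dimM: "dim_row M = n" using cM by auto
  note bd = assms(3)[folded M_def, unfolded bruhat_decomp_def Let_def dimM]
  have invM: "invertible_mat M" and cU1: "U1 \<in> carrier_mat n n" and uU1: "upper_triangular U1"
    and cU2: "U2 \<in> carrier_mat n n" and uU2: "upper_triangular U2" and pR: "permutation_mat n R"
    and MU: "M = U1 * R * U2" using bd by auto
  have cR: "R \<in> carrier_mat n n" using perm_carrier[OF pR] .
  have uMT: "upper_triangular (transpose_mat M)"
    using assms(2) cW unfolding M_def lower_triangular_def upper_triangular_def by auto
  have cMT: "transpose_mat M \<in> carrier_mat n n" using cM by auto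
  from invM obtain Mi0 where Mi0': "M * Mi0 = 1\<^sub>m n" "Mi0 * M = 1\<^sub>m (dim_row Mi0)"
    unfolding invertible_mat_def inverts_mat_def using dimM by auto
  have cMi0: "Mi0 \<in> carrier_mat n n"
  proof -
    have "dim_col (M * Mi0) = n" using Mi0' by simp
    moreover have "dim_col (Mi0 * M) = dim_row Mi0" using Mi0' by simp
    ultimately show ?thesis using cM by auto
  qed
  have Mi0: "M * Mi0 = 1\<^sub>m n" "Mi0 * M = 1\<^sub>m n" using Mi0' cMi0 by auto
  define Mi where "Mi = mat_inv M"
  have Mi: "Mi \<in> carrier_mat n n \<and> M * Mi = 1\<^sub>m n \<and> Mi * M = 1\<^sub>m n"
    unfolding Mi_def mat_inv_def dimM by (rule someI[of _ Mi0], insert cMi0 Mi0, auto)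
  have cMi: "Mi \<in> carrier_mat n n" using Mi by auto
  have dM: "det M \<noteq> 0" using arg_cong[OF Mi0(1), of det] det_mult[OF cM cMi0] by auto
  have dMi: "det Mi \<noteq> 0" using Mi arg_cong[of "M * Mi" "1\<^sub>m n" det] det_mult[OF cM cMi] by auto
  have dMd: "det M = det U1 * det R * det U2"
    unfolding MU using cU1 cU2 cR by (simp add: det_mult[of _ n])
  have dU1: "det U1 \<noteq> 0" and dU2: "det U2 \<noteq> 0" using dM dMd by auto
  obtain U1i where U1i: "U1i \<in> carrier_mat n n" "U1 * U1i = 1\<^sub>m n" "U1i * U1 = 1\<^sub>m n"
    using inverse_from_det[OF cU1 dU1] by blast
  obtain U2i where U2i: "U2i \<in> carrier_mat n n" "U2 * U2i = 1\<^sub>m n" "U2i * U2 = 1\<^sub>m n"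
    using inverse_from_det[OF cU2 dU2] by blast
  have uU1i: "upper_triangular U1i"
    by (rule ut_inv[OF cU1 uU1 U1i(1) U1i(2)], insert ut_diag_nz[OF cU1 uU1 dU1], auto)
  have uU2i: "upper_triangular U2i"
    by (rule ut_inv[OF cU2 uU2 U2i(1) U2i(2)], insert ut_diag_nz[OF cU2 uU2 dU2], auto)
  define RT where "RT = transpose_mat R"
  have cRT: "RT \<in> carrier_mat n n" unfolding RT_def using cR by auto
  have RRT: "R * RT = 1\<^sub>m n" unfolding RT_def by (rule perm_mult_transpose[OF pR])
  have pRT: "permutation_mat n RT" unfolding RT_def by (rule perm_transpose[OF pR])
  define X where "X = U2i * RT * U1i"
  have cX: "X \<in> carrier_mat n n" unfolding X_def using U2i U1i cRT by auto
  have MX: "M * X = 1\<^sub>m n"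
  proof -
    have "M * X = U1 * (R * ((U2 * U2i) * (RT * U1i)))"
      unfolding MU X_def using cU1 cR cU2 U2i(1) cRT U1i(1) by (simp add: assoc_mult_mat[of _ n n _ n _ n])
    also have "\<dots> = U1 * ((R * RT) * U1i)"
      unfolding U2i(2) using cU1 cR cRT U1i(1) by (simp add: assoc_mult_mat[of _ n n _ n _ n])
    also have "\<dots> = 1\<^sub>m n" using RRT U1i cU1 by simp
    finally show ?thesis .
  qed
  have MiX: "Mi = X"
  proof -
    have "Mi = Mi * (M * X)" using MX cMi by simp
    also have "\<dots> = (Mi * M) * X" using cMi cM cX by (simp add: assoc_mult_mat[of _ n n _ n _ n])
    also have "\<dots> = X" using Mi cX by simp
    finally show ?thesis .
  qed
  define C where "C = coxeter_mat M"
  define V1 where "V1 = - (transpose_mat M * U2i)"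
  have cV1: "V1 \<in> carrier_mat n n" unfolding V1_def using cMT U2i by auto
  have uV1: "upper_triangular V1"
  proof -
    have "upper_triangular (transpose_mat M * U2i)" by (rule ut_mult(1)[OF cMT U2i(1) uMT uU2i])
    thus ?thesis unfolding V1_def upper_triangular_def using cM U2i(1) by auto
  qed
  have CV: "C = V1 * RT * U1i"
  proof -
    have "C = - (transpose_mat M * (U2i * RT * U1i))"
      unfolding C_def coxeter_mat_def Mi_def[symmetric] MiX X_def ..
    also have "\<dots> = V1 * RT * U1i"
      unfolding V1_def using cMT U2i cRT U1i by (simp add: assoc_mult_mat[of _ n n _ n _ n])
    finally show ?thesis .
  qed
  have cC: "C \<in> carrier_mat n n" unfolding CV using cV1 cRT U1i by auto
  have dC: "det C \<noteq> 0"
  proof -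
    have "C = (-1) \<cdot>\<^sub>m (transpose_mat M * Mi)"
      unfolding C_def coxeter_mat_def Mi_def[symmetric] by (rule eq_matI, auto)
    hence "det C = (-1) ^ n * (det (transpose_mat M) * det Mi)"
      using cMT cMi by (simp add: det_mult[OF cMT cMi])
    thus ?thesis using det_transpose[OF cM] dM dMi by simp
  qed
  have invC: "invertible_mat C"
  proof -
    obtain B where "B \<in> carrier_mat n n" "C * B = 1\<^sub>m n" "B * C = 1\<^sub>m n"
      using inverse_from_det[OF cC dC] by blast
    thus ?thesis unfolding invertible_mat_def inverts_mat_def square_mat.simps using cC by auto
  qed
  have dimC: "dim_row C = n" using cC by auto
  have part1: "bruhat_decomp C V1 RT U1i"
    unfolding bruhat_decomp_def Let_def dimC using cC invC cV1 uV1 U1i uU1i pRT CV by auto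
  have part2: "col_perm P i = row_perm R i" if b: "bruhat_decomp C V1' P V2'" and i: "i < n" for V1' P V2' i
  proof -
    note b' = b[unfolded bruhat_decomp_def Let_def dimC]
    have "RT = P"
      by (rule bruhat_unique[OF CV _ cV1 U1i(1) _ _ uV1 uU1i _ _ pRT _ dC], insert b', auto)
    hence PR: "P = transpose_mat R" unfolding RT_def by simp
    have "col_perm P i = (THE j. j < dim_col R \<and> transpose_mat R $$ (j,i) \<noteq> 0)"
      unfolding col_perm_def PR by simp
    also have "\<dots> = row_perm R i" unfolding row_perm_def
      by (rule arg_cong[where f = The], rule ext, insert i cR, auto)
    finally show ?thesis .
  qed
  have p1: "bruhat_decomp (coxeter_mat (map_mat real_of_int W)) V1 RT U1i"
    using part1 unfolding C_def M_def .
  show ?thesis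
  proof (intro conjI allI impI)
    show "\<exists>V1 P V2. bruhat_decomp (coxeter_mat (map_mat real_of_int W)) V1 P V2"
      using p1 by (intro exI)
  next
    fix V1' P V2' i
    assume "bruhat_decomp (coxeter_mat (map_mat real_of_int W)) V1' P V2'" and "i < n"
    thus "col_perm P i = row_perm R i" using part2 unfolding C_def M_def by simp
  qed
qed

end
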